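(* Let $n$ be a positive integer and let $\frac{a_1}{b_1} < \frac{a_2}{b_2} < \cdots$ be the Farey sequence of order $n$. Let $k \le l$ be indices and let $\frac{a}{b}$ (in lowest terms) be a fraction of the Farey sequence of order $n$ with $\frac{a_k}{b_k} \le \frac{a}{b} \le \frac{a_l}{b_l}$. If $l - k \le \frac{n+b+1}{2b}$, then $(a_l - a_k)(b_l - b_k) \ge 0$.
   Context: The Farey sequence of order $n$ is the increasing list of all reduced fractions $\frac{a}{b}$ with $0 \le \frac{a}{b} \le 1$ and $1 \le b \le n$ (including $\frac01$ and $\frac11$), each written in lowest terms, indexed in increasing order. Two fractions $\frac{a}{b}, \frac{a'}{b'}$ in lowest terms are called similarly ordered if $(a'-a)(b'-b) \ge 0$. *)

theory Defs
  imports "HOL-Analysis.Analysis"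
begin

definition farey_set :: "nat \<Rightarrow> rat set" where
  "farey_set n = {q. 0 \<le> q \<and> q \<le> 1 \<and> snd (quotient_of q) \<le> int n}"

definition farey :: "nat \<Rightarrow> rat list" where
  "farey n = sorted_list_of_set (farey_set n)"

definition num :: "rat \<Rightarrow> int" where "num q = fst (quotient_of q)"
definition den :: "rat \<Rightarrow> int" where "den q = snd (quotient_of q)"

end

theory Submission
  imports Defs
begin


lemma qfacts: fixes x :: rat
  shows "den x > 0" "coprime (num x) (den x)" "x = of_int (num x) / of_int (den x)"
  using quotient_of_denom_pos' quotient_of_coprime quotient_of_div
  by (auto simp: num_def den_def)

lemma le_frac: fixes u1 v1 u2 v2 :: int assumes "v1 > 0" "v2 > 0"
  shows "(of_int u1 / of_int v1 \<le> (of_int u2 / of_int v2 :: rat)) \<longleftrightarrow> u1 * v2 \<le> u2 * v1"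
proof -
  have "(of_int u1 / of_int v1 \<le> (of_int u2 / of_int v2 :: rat)) \<longleftrightarrow> of_int u1 * of_int v2 \<le> (of_int u2 * of_int v1 :: rat)"
    using assms by (simp add: divide_simps)
  also have "\<dots> \<longleftrightarrow> u1 * v2 \<le> u2 * v1" by (metis of_int_le_iff of_int_mult)
  finally show ?thesis .
qed

lemma less_frac: fixes u1 v1 u2 v2 :: int assumes "v1 > 0" "v2 > 0"
  shows "(of_int u1 / of_int v1 < (of_int u2 / of_int v2 :: rat)) \<longleftrightarrow> u1 * v2 < u2 * v1"
  using le_frac[OF assms(2,1), of u2 u1] by (simp add: not_le[symmetric])

lemma farey_mem: "x \<in> farey_set n \<Longrightarrow> 0 \<le> num x \<and> num x \<le> den x \<and> den x \<le> int n"
proof -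
  assume x: "x \<in> farey_set n"
  have d: "den x > 0" and e: "x = of_int (num x) / of_int (den x)" using qfacts by auto
  have "0 \<le> x" "x \<le> 1" "den x \<le> int n" using x by (auto simp: farey_set_def den_def)
  then have "of_int 0 / of_int 1 \<le> (of_int (num x) / of_int (den x) :: rat)"
     "(of_int (num x) / of_int (den x) :: rat) \<le> of_int 1 / of_int 1" using e by simp_all
  then have "0 * den x \<le> num x * 1" "num x * 1 \<le> 1 * den x"
    using le_frac[of 1 "den x" 0 "num x"] le_frac[of "den x" 1 "num x" 1] d by auto
  then show ?thesis using \<open>den x \<le> int n\<close> by simp
qed

lemma farey_intro: fixes u v :: int assumes "0 \<le> u" "u \<le> v" "0 < v" "v \<le> int n"
  shows "(of_int u / of_int v :: rat) \<in> farey_set n"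
proof -
  have q: "quotient_of (of_int u / of_int v) = Rat.normalize (u, v)"
    by (metis Fract_of_int_quotient quotient_of_Fract)
  have g: "gcd u v > 0" using assms by simp
  have "v div gcd u v \<le> v" using zdiv_mono2[of v 1 "gcd u v"] g assms by simp
  then have "snd (quotient_of (of_int u / of_int v)) \<le> int n" using q assms
    by (simp add: Rat.normalize_def Let_def)
  moreover have "(0::rat) \<le> of_int u / of_int v" using assms by simp
  moreover have "(of_int u / of_int v :: rat) \<le> 1" using assms by (simp add: divide_simps)
  ultimately show ?thesis by (simp add: farey_set_def)
qed

lemma count_le: fixes xs :: "'a::linorder list"
  assumes "sorted_wrt (<) xs" "k \<le> l" "l < length xs" "S \<subseteq> set xs" "\<forall>y\<in>S. xs!k \<le> y \<and> y \<le> xs!l"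
  shows "card S \<le> l - k + 1"
proof -
  have "S \<subseteq> (\<lambda>i. xs!i) ` {k..l}"
  proof
    fix y assume y: "y \<in> S"
    then obtain j where j: "j < length xs" "y = xs!j" using assms(4) by (metis in_set_conv_nth subsetD)
    have yk: "xs!k \<le> xs!j" "xs!j \<le> xs!l" using y j assms(5) by auto
    have "\<not> j < k"
    proof
      assume "j < k"
      then have "xs!j < xs!k" using sorted_wrt_nth_less[OF assms(1), of j k] assms(2,3) by simp
      then show False using yk by simp
    qed
    moreover have "\<not> l < j"
    proof
      assume "l < j"
      then have "xs!l < xs!j" using sorted_wrt_nth_less[OF assms(1), of l j] j by simp
      then show False using yk by simp
    qed
    ultimately show "y \<in> (\<lambda>i. xs!i) ` {k..l}" using j by auto
  qed
  then have "card S \<le> card ((\<lambda>i. xs!i) ` {k..l})" by (intro card_mono) auto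
  also have "\<dots> \<le> card {k..l}" by (rule card_image_le) simp
  finally show ?thesis by simp
qed



lemma bez: fixes a b :: int assumes "coprime a b" "b \<ge> 2"
  shows "\<exists>p0 r0. a * r0 - b * p0 = 1 \<and> 1 \<le> r0 \<and> r0 < b"
proof -
  obtain x y where xy: "x * a + y * b = 1" using bezout_int[of a b] assms(1) by auto
  define r0 where "r0 = x mod b"
  have e: "x = b * (x div b) + r0" unfolding r0_def by simp
  have h: "a * r0 - b * (- y - a * (x div b)) = a * (b * (x div b) + r0) + y * b"
    by (simp add: algebra_simps)
  have h1: "a * r0 - b * (- y - a * (x div b)) = 1" using h xy e by (simp add: mult.commute)
  have r: "0 \<le> r0" "r0 < b" using assms unfolding r0_def by auto
  have "r0 \<noteq> 0"
  proof
    assume "r0 = 0"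
    with h1 have "b dvd 1" by (metis diff_0 dvd_minus_iff dvd_triv_left mult_zero_right)
    then show False using assms by auto
  qed
  then have "1 \<le> r0" using r by simp
  then show ?thesis using h1 r by blast
qed

lemma rep_left: fixes a b p0 r0 u v tau :: int
  assumes "a * r0 - b * p0 = 1" "(p0 + tau * a) * v \<le> u * (r0 + tau * b)" "u * b \<le> a * v" "tau \<ge> 0"
  shows "\<exists>dl t. dl \<ge> 0 \<and> t \<ge> tau * dl \<and> u = dl * p0 + t * a \<and> v = dl * r0 + t * b"
proof (intro exI conjI)
  show "a* v - b * u \<ge> 0" using assms by (simp add: mult.commute)
  have "u * (r0 + tau * b) - (p0 + tau * a) * v = (r0 * u - p0* v) - tau * (a* v - b * u)" by (simp add: algebra_simps)
  then show "r0 * u - p0* v \<ge> tau * (a* v - b * u)" using assms(2) by linarith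
  have "(a* v - b * u) * p0 + (r0 * u - p0* v) * a = u * (a * r0 - b * p0)" by (simp add: algebra_simps)
  then show "u = (a* v - b * u) * p0 + (r0 * u - p0* v) * a" using assms(1) by simp
  have "(a* v - b * u) * r0 + (r0 * u - p0* v) * b = v * (a * r0 - b * p0)" by (simp add: algebra_simps)
  then show "v = (a* v - b * u) * r0 + (r0 * u - p0* v) * b" using assms(1) by simp
qed

lemma rep_right: fixes a b p1 r1 u v tau :: int
  assumes "b * p1 - a * r1 = 1" "u * (r1 + tau * b) \<le> (p1 + tau * a) * v" "a * v \<le> u * b" "tau \<ge> 0"
  shows "\<exists>e s. e \<ge> 0 \<and> s \<ge> tau * e \<and> u = e * p1 + s * a \<and> v = e * r1 + s * b"
proof (intro exI conjI)
  show "b * u - a* v \<ge> 0" using assms by (simp add: mult.commute)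
  have "(p1 + tau * a) * v - u * (r1 + tau * b) = (p1* v - r1 * u) - tau * (b * u - a* v)" by (simp add: algebra_simps)
  then show "p1* v - r1 * u \<ge> tau * (b * u - a* v)" using assms(2) by linarith
  have "(b * u - a* v) * p1 + (p1* v - r1 * u) * a = u * (b * p1 - a * r1)" by (simp add: algebra_simps)
  then show "u = (b * u - a* v) * p1 + (p1* v - r1 * u) * a" using assms(1) by simp
  have "(b * u - a* v) * r1 + (p1* v - r1 * u) * b = v * (b * p1 - a * r1)" by (simp add: algebra_simps)
  then show "v = (b * u - a* v) * r1 + (p1* v - r1 * u) * b" using assms(1) by simp
qed

lemma unit_coprime: fixes e x y :: int assumes "coprime (e * x) (e * y)" "e \<ge> 0" shows "e = 1"
proof -
  have "coprime e e" using assms(1) by (metis coprime_mult_left_iff coprime_mult_right_iff)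
  then have "e dvd 1" by simp
  then show ?thesis using assms(2) by (simp add: zdvd1_eq)
qed



theorem lemma4:
  fixes n k l :: nat and q :: rat
  assumes "n \<ge> 1"
    and "k \<le> l" and "l < length (farey n)"
    and "q \<in> set (farey n)"
    and "farey n ! k \<le> q" and "q \<le> farey n ! l"
    and "real (l - k) \<le> (real n + real_of_int (den q) + 1) / (2 * real_of_int (den q))"
  shows "(num (farey n ! l) - num (farey n ! k)) * (den (farey n ! l) - den (farey n ! k)) \<ge> 0"
proof (rule ccontr)
  assume neg: "\<not> ?thesis"
  define F where "F = farey_set n"
  have len: "length (farey n) = card F" by (simp add: farey_def F_def)
  have fin: "finite F" using assms(3) len card.infinite by force
  have setF: "set (farey n) = F" using fin by (simp add: farey_def F_def)
  have srt: "sorted_wrt (<) (farey n)" by (simp add: farey_def strict_sorted_list_of_set)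
  define xk where "xk = farey n ! k"
  define xl where "xl = farey n ! l"
  have xkF: "xk \<in> F" using assms(2,3) setF xk_def by (metis le_less_trans nth_mem)
  have xlF: "xl \<in> F" using assms(3) setF xl_def by (metis nth_mem)
  have qF: "q \<in> F" using assms(4) setF by simp
  have cnt: "\<And>S. S \<subseteq> F \<Longrightarrow> \<forall>y\<in>S. xk \<le> y \<and> y \<le> xl \<Longrightarrow> card S \<le> l - k + 1"
    using count_le[OF srt assms(2) assms(3)] setF xk_def xl_def by auto
  define ak where "ak = num xk"
  define bk where "bk = den xk"
  define al where "al = num xl"
  define bl where "bl = den xl"
  define a where "a = num q"
  define b where "b = den q"
  have ek: "xk = of_int ak / of_int bk" and bk0: "bk > 0" and cpk: "coprime ak bk"
    using qfacts ak_def bk_def by auto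
  have el: "xl = of_int al / of_int bl" and bl0: "bl > 0" and cpl: "coprime al bl"
    using qfacts al_def bl_def by auto
  have eq: "q = of_int a / of_int b" and b0: "b > 0" and cpq: "coprime a b"
    using qfacts a_def b_def by auto
  have rk: "0 \<le> ak" "ak \<le> bk" "bk \<le> int n" using farey_mem[of xk n] xkF F_def ak_def bk_def by auto
  have rl: "0 \<le> al" "al \<le> bl" "bl \<le> int n" using farey_mem[of xl n] xlF F_def al_def bl_def by auto
  have rq: "0 \<le> a" "a \<le> b" "b \<le> int n" using farey_mem[of q n] qF F_def a_def b_def by auto
  have hyp: "2 * b * int (l - k) \<le> int n + b + 1"
  proof -
    have "real (l - k) * (2 * real_of_int b) \<le> real n + real_of_int b + 1"
      using assms(7) b0 by (simp add: b_def pos_le_divide_eq)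
    then have "real_of_int (2 * b * int (l - k)) \<le> real_of_int (int n + b + 1)" by (simp add: algebra_simps)
    then show ?thesis by (simp only: of_int_le_iff)
  qed
  have kq: "ak * b \<le> a * bk" using assms(5) le_frac[OF bk0 b0] ek eq xk_def by simp
  have ql: "a * bl \<le> al * b" using assms(6) le_frac[OF b0 bl0] el eq xl_def by simp
  have kl: "ak * bl \<le> al * bk" using kq ql assms(5,6) le_frac[OF bk0 bl0] ek el xk_def xl_def
    by (metis order_trans)
  have bad: "al > ak \<and> bl < bk"
  proof -
    have "(al - ak) * (bl - bk) < 0" using neg al_def ak_def bl_def bk_def xk_def xl_def by simp
    then have "(al > ak \<and> bl < bk) \<or> (al < ak \<and> bl > bk)" by (auto simp: mult_less_0_iff)
    moreover have False if "al < ak" "bl > bk"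
    proof -
      have "al * bk \<le> al * bl" using that rl by (simp add: mult_left_mono)
      also have "\<dots> < ak * bl" using that bl0 by (simp add: mult_strict_right_mono)
      finally show False using kl by simp
    qed
    ultimately show ?thesis by auto
  qed
  have ak1: "ak \<ge> 1"
  proof (rule ccontr)
    assume "\<not> ak \<ge> 1"
    then have "ak = 0" using rk by simp
    then have "bk = 1" using cpk bk0 by (simp add: zdvd1_eq)
    then show False using bad bl0 by simp
  qed
  have a1: "a \<ge> 1"
  proof -
    have "ak * b > 0" using ak1 b0 by simp
    then have "a * bk > 0" using kq by simp
    then show ?thesis using bk0 by (simp add: zero_less_mult_iff)
  qed
  have b2: "b \<ge> 2"
  proof (rule ccontr)
    assume "\<not> b \<ge> 2"
    then have "b = 1" "a = 1" using b0 a1 rq by auto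
    then have "al = bl" using ql rl by simp
    then have "al = 1" using cpl unit_coprime[of al 1 1] rl by simp
    then show False using bad ak1 by simp
  qed
  have ab: "a < b"
  proof (rule ccontr)
    assume "\<not> a < b"
    then have "a = b" using rq by simp
    then have "b = 1" using cpq unit_coprime[of b 1 1] rq by simp
    then show False using b2 by simp
  qed
  obtain p0 r0 where pr: "a * r0 - b * p0 = 1" "1 \<le> r0" "r0 < b" using bez[OF cpq b2] by blast
  have bp0: "b * p0 = a * r0 - 1" using pr by simp
  have p0: "p0 \<ge> 0"
  proof -
    have "a * r0 \<ge> a * 1" using a1 pr(2) by (intro mult_left_mono) auto
    then have "b * p0 \<ge> 0" using bp0 a1 by simp
    then show ?thesis using b0 by (simp add: zero_le_mult_iff)
  qed
  have p0r0: "p0 < r0"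
  proof -
    have "a * r0 \<le> b * r0" using ab pr(2) by (intro mult_right_mono) auto
    then have "b * p0 < b * r0" using bp0 by simp
    then show ?thesis using b0 by simp
  qed
  have p0a: "p0 < a"
  proof -
    have "a * r0 < a * b" using a1 pr(3) by (intro mult_strict_left_mono) auto
    then have "b * p0 < a * b" using bp0 by simp
    then show ?thesis using b0 by (simp add: mult.commute)
  qed
  define p1 where "p1 = a - p0"
  define r1 where "r1 = b - r0"
  have pr1: "b * p1 - a * r1 = 1" using pr unfolding p1_def r1_def by (simp add: algebra_simps)
  have r1: "1 \<le> r1" "r1 < b" using pr unfolding r1_def by auto
  have p1: "1 \<le> p1" using p0a p1_def by simp
  have p1r1: "p1 \<le> r1"
  proof -
    have "b * p1 = a * r1 + 1" using pr1 by simp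
    also have "\<dots> \<le> (b - 1) * r1 + 1" using ab r1 by (simp add: mult_right_mono)
    also have "\<dots> \<le> b * r1" using r1 by (simp add: algebra_simps)
    finally show ?thesis using b0 by simp
  qed
  define c where "c t = (of_int (p0 + t * a) / of_int (r0 + t * b) :: rat)" for t :: int
  define d where "d t = (of_int (p1 + t * a) / of_int (r1 + t * b) :: rat)" for t :: int
  have cpos: "r0 + t * b > 0" if "t \<ge> 0" for t using that pr b0 by (smt (verit) mult_nonneg_nonneg)
  have dpos: "r1 + t * b > 0" if "t \<ge> 0" for t using that r1 b0 by (smt (verit) mult_nonneg_nonneg)
  have cF: "c t \<in> F" if "t \<ge> 0" "r0 + t * b \<le> int n" for t
  proof -
    have "t * a \<le> t * b" using that ab by (simp add: mult_left_mono)
    moreover have "t * a \<ge> 0" using that a1 by simp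
    ultimately show ?thesis unfolding c_def F_def using cpos[OF that(1)] that p0 p0r0 by (intro farey_intro) linarith+
  qed
  have dF: "d t \<in> F" if "t \<ge> 0" "r1 + t * b \<le> int n" for t
  proof -
    have "t * a \<le> t * b" using that ab by (simp add: mult_left_mono)
    moreover have "t * a \<ge> 0" using that a1 by simp
    ultimately show ?thesis unfolding d_def F_def using dpos[OF that(1)] that p1 p1r1 by (intro farey_intro) linarith+
  qed
  have cmono: "c s < c t" if "0 \<le> s" "s < t" for s t
  proof -
    have "(p0 + t * a) * (r0 + s * b) - (p0 + s * a) * (r0 + t * b) = (t - s) * (a * r0 - b * p0)"
      by (simp add: algebra_simps)
    then have "(p0 + s * a) * (r0 + t * b) < (p0 + t * a) * (r0 + s * b)" using pr that by simp
    moreover have "0 < r0 + s * b" "0 < r0 + t * b" using cpos that by auto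
    ultimately show ?thesis unfolding c_def using less_frac by blast
  qed
  have dmono: "d t < d s" if "0 \<le> s" "s < t" for s t
  proof -
    have "(p1 + s * a) * (r1 + t * b) - (p1 + t * a) * (r1 + s * b) = (t - s) * (b * p1 - a * r1)"
      by (simp add: algebra_simps)
    then have "(p1 + t * a) * (r1 + s * b) < (p1 + s * a) * (r1 + t * b)" using pr1 that by simp
    moreover have "0 < r1 + s * b" "0 < r1 + t * b" using dpos that by auto
    ultimately show ?thesis unfolding d_def using less_frac by blast
  qed
  have cq: "c t < q" if "0 \<le> t" for t
  proof -
    have "a * (r0 + t * b) - (p0 + t * a) * b = a * r0 - b * p0" by (simp add: algebra_simps)
    then have "(p0 + t * a) * b < a * (r0 + t * b)" using pr by simp
    moreover have "0 < r0 + t * b" using cpos that by auto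
    ultimately show ?thesis unfolding c_def eq using less_frac b0 by blast
  qed
  have dq: "q < d t" if "0 \<le> t" for t
  proof -
    have "(p1 + t * a) * b - a * (r1 + t * b) = b * p1 - a * r1" by (simp add: algebra_simps)
    then have "a * (r1 + t * b) < (p1 + t * a) * b" using pr1 by simp
    moreover have "0 < r1 + t * b" using dpos that by auto
    ultimately show ?thesis unfolding d_def eq using less_frac b0 by blast
  qed
  obtain T where T: "0 \<le> T" "r0 + T * b \<le> int n" "int n < r0 + (T + 1) * b"
  proof
    define T where "T = (int n - r0) div b"
    have e: "int n - r0 = b * T + (int n - r0) mod b" unfolding T_def by simp
    have m: "0 \<le> (int n - r0) mod b" "(int n - r0) mod b < b" using b0 by auto
    show "0 \<le> T" unfolding T_def using pos_imp_zdiv_nonneg_iff[OF b0] pr rq by simp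
    show "r0 + T * b \<le> int n" using e m by (simp add: mult.commute)
    show "int n < r0 + (T + 1) * b" using e m by (simp add: algebra_simps)
  qed
  obtain T' where T': "0 \<le> T'" "r1 + T' * b \<le> int n" "int n < r1 + (T' + 1) * b"
  proof
    define T where "T = (int n - r1) div b"
    have e: "int n - r1 = b * T + (int n - r1) mod b" unfolding T_def by simp
    have m: "0 \<le> (int n - r1) mod b" "(int n - r1) mod b < b" using b0 by auto
    show "0 \<le> T" unfolding T_def using pos_imp_zdiv_nonneg_iff[OF b0] r1 rq by simp
    show "r1 + T * b \<le> int n" using e m by (simp add: mult.commute)
    show "int n < r1 + (T + 1) * b" using e m by (simp add: algebra_simps)
  qed
  have thr: "\<exists>t0. 0 \<le> t0 \<and> int n < 2 * (r + t0 * b) \<and> 2 * b * t0 \<le> int n - 2 * r + 2 * b"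
    if "0 \<le> r" "r < b" for r
  proof (cases "int n < 2 * r")
    case True then show ?thesis using that by (intro exI[of _ 0]) auto
  next
    case False
    define t0 where "t0 = (int n - 2 * r) div (2 * b) + 1"
    have e: "int n - 2 * r = (2 * b) * (t0 - 1) + (int n - 2 * r) mod (2 * b)" unfolding t0_def by simp
    have m: "0 \<le> (int n - 2 * r) mod (2 * b)" "(int n - 2 * r) mod (2 * b) < 2 * b" using b0 by auto
    have "0 \<le> t0" unfolding t0_def using pos_imp_zdiv_nonneg_iff[of "2 * b" "int n - 2 * r"] False b0 by simp
    moreover have "int n < 2 * (r + t0 * b)" using e m by (simp add: algebra_simps)
    moreover have "2 * b * t0 \<le> int n - 2 * r + 2 * b" using e m by (simp add: algebra_simps)
    ultimately show ?thesis by blast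
  qed
  obtain t0 where t0: "0 \<le> t0" "int n < 2 * (r0 + t0 * b)" "2 * b * t0 \<le> int n - 2 * r0 + 2 * b"
    using thr[of r0] pr by auto
  obtain u0 where u0: "0 \<le> u0" "int n < 2 * (r1 + u0 * b)" "2 * b * u0 \<le> int n - 2 * r1 + 2 * b"
    using thr[of r1] r1 by auto
  have fin_arith: "False" if "int (l - k) \<ge> X" "2 * b * X > int n + b + 1" for X
  proof -
    have "2 * b * X \<le> 2 * b * int (l - k)" using that b0 by (simp add: mult_left_mono)
    then show False using hyp that by simp
  qed
  have cardU: "card (A \<union> g ` {lo..hi}) = card A + nat (hi - lo + 1)"
    if "inj_on g {lo..hi}" "finite A" "g ` {lo..hi} \<inter> A = {}" for A and g :: "int \<Rightarrow> rat" and lo hi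
  proof -
    have "card (A \<union> g ` {lo..hi}) = card A + card (g ` {lo..hi})"
      using that by (intro card_Un_disjoint) auto
    also have "card (g ` {lo..hi}) = nat (hi - lo + 1)" using that card_image by fastforce
    finally show ?thesis .
  qed
  have cinj: "inj_on c {lo..hi}" if "0 \<le> lo" for lo hi
    by (rule inj_onI) (metis atLeastAtMost_iff cmono linorder_neqE order_less_irrefl order_trans that)
  have dinj: "inj_on d {lo..hi}" if "0 \<le> lo" for lo hi
    by (rule inj_onI) (metis atLeastAtMost_iff dmono linorder_neqE order_less_irrefl order_trans that)
  have chain: "int (l - k) \<ge> int (card A) - 1 + (hi - lo + 1)"
    if "A \<subseteq> F" "finite A" "\<forall>y\<in>A. xk \<le> y \<and> y \<le> xl" "inj_on g {lo..hi}"
       "\<forall>t\<in>{lo..hi}. g t \<in> F \<and> xk \<le> g t \<and> g t \<le> xl \<and> g t \<notin> A" for A g lo hi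
  proof -
    have "card (A \<union> g ` {lo..hi}) = card A + nat (hi - lo + 1)"
      using that by (intro cardU) auto
    moreover have "card (A \<union> g ` {lo..hi}) \<le> l - k + 1" using that by (intro cnt) auto
    ultimately show ?thesis by linarith
  qed
  have cle: "c s \<le> c t" if "0 \<le> s" "s \<le> t" for s t
    using cmono[of s t] that by (cases "s = t") auto
  have dle: "d t \<le> d s" if "0 \<le> s" "s \<le> t" for s t
    using dmono[of s t] that by (cases "s = t") auto
  have xk_c: "c t \<le> xk \<longleftrightarrow> (p0 + t * a) * bk \<le> ak * (r0 + t * b)" if "0 \<le> t" for t
    unfolding c_def ek using le_frac cpos[OF that] bk0 by blast
  have xl_d: "xl \<le> d t \<longleftrightarrow> al * (r1 + t * b) \<le> (p1 + t * a) * bl" if "0 \<le> t" for t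
    unfolding d_def el using le_frac dpos[OF that] bl0 by blast
  have xkq: "xk \<le> q" and qxl: "q \<le> xl" using assms(5,6) xk_def xl_def by auto
  have Tn: "2 * b * (T + 2) > int n + b + 1" using T pr rq by (simp add: algebra_simps)
  have Tn': "2 * b * (T' + 2) > int n + b + 1" using T' r1 rq by (simp add: algebra_simps)
  have Tn0: "2 * b * (T - t0 + 3) > int n + b + 1" using T t0 pr rq by (simp add: algebra_simps)
  have Tn0': "2 * b * (T' - u0 + 3) > int n + b + 1" using T' u0 r1 rq by (simp add: algebra_simps)
  show False
  proof (cases "xk = q")
    case True
    then have akq: "ak = a" "bk = b" using ak_def bk_def a_def b_def by auto
    have "xl \<noteq> q" using bad akq bl_def b_def by auto
    have dl: "d 0 < xl"
    proof (rule ccontr)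
      assume "\<not> d 0 < xl"
      then have "al * (r1 + 0 * b) \<le> (p1 + 0 * a) * bl" using xl_d[of 0] by simp
      from rep_right[OF pr1 this ql] obtain e s where es: "e \<ge> 0" "s \<ge> 0"
        "al = e * p1 + s * a" "bl = e * r1 + s * b" by auto
      have "s = 0"
      proof (rule ccontr)
        assume "s \<noteq> 0"
        then have "s * b \<ge> 1 * b" using es b0 by (intro mult_right_mono) auto
        moreover have "e * r1 \<ge> 0" using es r1 by simp
        ultimately show False using es bad akq by simp
      qed
      then have "e = 1" using es cpl unit_coprime[of e p1 r1] by simp
      then show False using es \<open>s = 0\<close> bad akq p0 p1_def by simp
    qed
    have "int (l - k) \<ge> int (card {q, xl}) - 1 + (T' - 0 + 1)"
    proof (rule chain)
      show "{q, xl} \<subseteq> F" using qF xlF by auto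
      show "\<forall>y\<in>{q, xl}. xk \<le> y \<and> y \<le> xl" using True qxl by auto
      show "inj_on d {0..T'}" by (rule dinj) simp
      show "\<forall>t\<in>{0..T'}. d t \<in> F \<and> xk \<le> d t \<and> d t \<le> xl \<and> d t \<notin> {q, xl}"
      proof
        fix t assume t: "t \<in> {0..T'}"
        have "r1 + t * b \<le> r1 + T' * b" using t b0 by (simp add: mult_right_mono)
        then have "d t \<in> F" using t T' by (intro dF) auto
        moreover have "q < d t" using dq t by simp
        moreover have "d t < xl" using dle[of 0 t] dl t by simp
        ultimately show "d t \<in> F \<and> xk \<le> d t \<and> d t \<le> xl \<and> d t \<notin> {q, xl}" using True by auto
      qed
    qed simp
    then have "int (l - k) \<ge> T' + 2" using \<open>xl \<noteq> q\<close> by simp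
    then show False using fin_arith Tn' by blast
  next
    case False
    note kneq = False
    then have xkq': "xk < q" using xkq by simp
    show False
    proof (cases "xl = q")
      case True
      then have alq: "al = a" "bl = b" using al_def bl_def a_def b_def by auto
      have ck: "xk < c 0"
      proof (rule ccontr)
        assume "\<not> xk < c 0"
        then have "(p0 + 0 * a) * bk \<le> ak * (r0 + 0 * b)" using xk_c[of 0] by simp
        from rep_left[OF pr(1) this kq] obtain e s where es: "e \<ge> 0" "s \<ge> 0"
          "ak = e * p0 + s * a" "bk = e * r0 + s * b" by auto
        have "s = 0"
        proof (rule ccontr)
          assume "s \<noteq> 0"
          then have "s * a \<ge> 1 * a" using es a1 by (intro mult_right_mono) auto
          moreover have "e * p0 \<ge> 0" using es p0 by simp
          ultimately show False using es bad alq by simp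
        qed
        then have "e = 1" using es cpk unit_coprime[of e p0 r0] by simp
        then show False using es \<open>s = 0\<close> bad alq pr by simp
      qed
      have "int (l - k) \<ge> int (card {xk, q}) - 1 + (T - 0 + 1)"
      proof (rule chain)
        show "{xk, q} \<subseteq> F" using qF xkF by auto
        show "\<forall>y\<in>{xk, q}. xk \<le> y \<and> y \<le> xl" using True xkq by auto
        show "inj_on c {0..T}" by (rule cinj) simp
        show "\<forall>t\<in>{0..T}. c t \<in> F \<and> xk \<le> c t \<and> c t \<le> xl \<and> c t \<notin> {xk, q}"
        proof
          fix t assume t: "t \<in> {0..T}"
          have "r0 + t * b \<le> r0 + T * b" using t b0 by (simp add: mult_right_mono)
          then have "c t \<in> F" using t T by (intro cF) auto
          moreover have "c t < q" using cq t by simp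
          moreover have "xk < c t" using cle[of 0 t] ck t by simp
          ultimately show "c t \<in> F \<and> xk \<le> c t \<and> c t \<le> xl \<and> c t \<notin> {xk, q}" using True by auto
        qed
      qed simp
      then have "int (l - k) \<ge> T + 2" using kneq by simp
      then show False using fin_arith Tn by blast
    next
      case False
      then have qxl': "q < xl" using qxl by simp
      have card3: "card {xk, q, xl} = 3" using xkq' qxl' by auto
      have A3: "{xk, q, xl} \<subseteq> F" "finite {xk, q, xl}" "\<forall>y\<in>{xk, q, xl}. xk \<le> y \<and> y \<le> xl"
        using xkF qF xlF xkq' qxl' by auto
      show False
      proof (cases "xk < c t0")
        case True
        have "int (l - k) \<ge> int (card {xk, q, xl}) - 1 + (T - t0 + 1)"
        proof (rule chain[OF A3])
          show "inj_on c {t0..T}" by (rule cinj) (use t0 in simp)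
          show "\<forall>t\<in>{t0..T}. c t \<in> F \<and> xk \<le> c t \<and> c t \<le> xl \<and> c t \<notin> {xk, q, xl}"
          proof
            fix t assume t: "t \<in> {t0..T}"
            have "r0 + t * b \<le> r0 + T * b" using t b0 by (simp add: mult_right_mono)
            then have "c t \<in> F" using t t0 T by (intro cF) auto
            moreover have "c t < q" using cq t t0 by simp
            moreover have "xk < c t" using cle[of t0 t] True t t0 by simp
            ultimately show "c t \<in> F \<and> xk \<le> c t \<and> c t \<le> xl \<and> c t \<notin> {xk, q, xl}" using qxl' by auto
          qed
        qed
        then have "int (l - k) \<ge> T - t0 + 3" using card3 by simp
        then show False using fin_arith Tn0 by blast
      next
        case False
        note nA = False
        show False
        proof (cases "d u0 < xl")
          case True
          have "int (l - k) \<ge> int (card {xk, q, xl}) - 1 + (T' - u0 + 1)"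
          proof (rule chain[OF A3])
            show "inj_on d {u0..T'}" by (rule dinj) (use u0 in simp)
            show "\<forall>t\<in>{u0..T'}. d t \<in> F \<and> xk \<le> d t \<and> d t \<le> xl \<and> d t \<notin> {xk, q, xl}"
            proof
              fix t assume t: "t \<in> {u0..T'}"
              have "r1 + t * b \<le> r1 + T' * b" using t b0 by (simp add: mult_right_mono)
              then have "d t \<in> F" using t u0 T' by (intro dF) auto
              moreover have "q < d t" using dq t u0 by simp
              moreover have "d t < xl" using dle[of u0 t] True t u0 by simp
              ultimately show "d t \<in> F \<and> xk \<le> d t \<and> d t \<le> xl \<and> d t \<notin> {xk, q, xl}" using xkq' by auto
            qed
          qed
          then have "int (l - k) \<ge> T' - u0 + 3" using card3 by simp
          then show False using fin_arith Tn0' by blast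
        next
          case False
          then have "(p1 + u0 * a) * bl \<ge> al * (r1 + u0 * b)" using xl_d[OF u0(1)] by simp
          from rep_right[OF pr1 this ql u0(1)] obtain e s where es: "e \<ge> 0" "s \<ge> u0 * e"
            "al = e * p1 + s * a" "bl = e * r1 + s * b" by auto
          have "(p0 + t0 * a) * bk \<le> ak * (r0 + t0 * b)" using nA xk_c[OF t0(1)] by simp
          from rep_left[OF pr(1) this kq t0(1)] obtain dl t where dt: "dl \<ge> 0" "t \<ge> t0 * dl"
            "ak = dl * p0 + t * a" "bk = dl * r0 + t * b" by auto
          have "dl \<noteq> 0"
          proof
            assume "dl = 0"
            then have "ak * b = a * bk" using dt by simp
            then show False using xkq' less_frac[OF bk0 b0] ek eq by simp
          qed
          have "e \<noteq> 0"
          proof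
            assume "e = 0"
            then have "a * bl = al * b" using es by simp
            then show False using qxl' less_frac[OF b0 bl0] el eq by simp
          qed
          have "dl \<le> 1"
          proof (rule ccontr)
            assume "\<not> dl \<le> 1"
            then have "t0 * dl \<ge> t0 * 2" using t0 by (intro mult_left_mono) auto
            then have "t * b \<ge> (t0 * 2) * b" using dt b0 by (intro mult_right_mono) auto
            moreover have "dl * r0 \<ge> 2 * r0" using \<open>\<not> dl \<le> 1\<close> pr by (intro mult_right_mono) auto
            ultimately show False using dt t0 rk by (simp add: algebra_simps)
          qed
          have "e \<le> 1"
          proof (rule ccontr)
            assume "\<not> e \<le> 1"
            then have "u0 * e \<ge> u0 * 2" using u0 by (intro mult_left_mono) auto
            then have "s * b \<ge> (u0 * 2) * b" using es b0 by (intro mult_right_mono) auto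
            moreover have "e * r1 \<ge> 2 * r1" using \<open>\<not> e \<le> 1\<close> r1 by (intro mult_right_mono) auto
            ultimately show False using es u0 rl by (simp add: algebra_simps)
          qed
          have d1: "dl = 1" using \<open>dl \<le> 1\<close> \<open>dl \<noteq> 0\<close> dt by simp
          have e1: "e = 1" using \<open>e \<le> 1\<close> \<open>e \<noteq> 0\<close> es by simp
          have kk: "ak = p0 + t * a" "bk = r0 + t * b" using dt d1 by auto
          have ll: "al = p1 + s * a" "bl = r1 + s * b" using es e1 by auto
          show False
          proof (cases "s = t")
            case True
            then have "p1 > p0" "r1 < r0" using kk ll bad by auto
            then have h: "a \<ge> 2 * p0 + 1" "b \<le> 2 * r0 - 1" unfolding p1_def r1_def by auto
            have "a * r0 \<ge> (2 * p0 + 1) * r0" using h pr by (intro mult_right_mono) auto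
            moreover have "b * p0 \<le> (2 * r0 - 1) * p0" using h p0 by (intro mult_right_mono) auto
            ultimately have "r0 + p0 \<le> 1" using pr by (simp add: algebra_simps)
            then show False using pr p0 b2 h by simp
          next
            case False
            show False
            proof (cases "s > t")
              case True
              then have "s * b \<ge> (t + 1) * b" using b0 by (intro mult_right_mono) auto
              then show False using kk ll bad pr r1_def by (simp add: algebra_simps)
            next
              case False
              then have "s + 1 \<le> t" using \<open>s \<noteq> t\<close> by simp
              then have "(s + 1) * a \<le> t * a" using a1 by (intro mult_right_mono) auto
              then show False using kk ll bad p0 p1_def by (simp add: algebra_simps)
            qed
          qed
        qed
      qed
    qed
  qed
qed
end
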